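(* For every $\varepsilon>0$, the following algorithm is $(\varepsilon,0)$-differentially private. Given a graph $G=([n],E)$: set $d=10000/\varepsilon^2$; for each $v\in[n]$ let $\hat d(v)=d(v)+\mathrm{Lap}(3/\varepsilon)$ (independent noise) and let $\mathcal C=\{v:\hat d(v)>d\}$; let $G_1=(\mathcal C,E_1)$ with $E_1=\{\{u,v\}\in E: u,v\in\mathcal C\}$; sample a cut $S_1^A\in\{\pm1\}^{\mathcal C}$ of $G_1$ with $\Pr[S_1^A=\hat S]\propto\exp(\varepsilon\,\mathrm{val}_{G_1}(\hat S)/6)$; let $S_1^B$ be a uniformly random assignment in $\{\pm1\}^{[n]\setminus\mathcal C}$ and $S_1$ the concatenation of $S_1^A$ and $S_1^B$; let $S_2$ be the output of the algorithm $\mathcal A_{\varepsilon/3}$ on $G$; output $S_1$ with probability $1/2$ and $S_2$ with probability $1/2$. Here $\mathcal A_{\varepsilon'}$ is: set $\varepsilon_0=\varepsilon'/2$, choose independent uniform $c_1(v),c_2(v)\in\{\pm1\}$ for all $v$, let $\ell(v)=|\{u:\{u,v\}\in E,c_1(u)=c_1(v)\}|$, sample independent $\zeta_v\sim\mathrm{DLap}(1/\varepsilon_0)$, set $c(v)=c_1(v)$ if $\ell(v)-\lceil\frac{d(v)-1}2\rceil+\zeta_v\le0$ and $c(v)=c_2(v)$ otherwise, and output $c$ (equivalently $\{v:c(v)=+1\}$).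
   Context: $G$ is a simple undirected graph; $d(v)$ is its degree. A cut is an assignment in $\{\pm1\}^V$ (equivalently a vertex subset), and $\mathrm{val}_H(\hat S)$ is the number of edges of $H$ whose endpoints receive different values. $\mathrm{Lap}(b)$ has density $\frac1{2b}e^{-|x|/b}$; $\mathrm{DLap}(1/\varepsilon_0)$ has mass $\frac{e^{\varepsilon_0}-1}{e^{\varepsilon_0}+1}e^{-\varepsilon_0|x|}$ at $x\in\mathbb Z$. Neighboring graphs on $[n]$ differ by one edge; $(\varepsilon,0)$-DP means $\Pr[\mathcal M(G)\in T]\le e^\varepsilon\Pr[\mathcal M(G')\in T]$ for neighbors and all output sets $T$. *)

theory Defs
  imports "HOL-Probability.Probability"
begin

definition graph_on :: "nat \<Rightarrow> nat set set \<Rightarrow> bool" where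
  "graph_on n E \<longleftrightarrow> (\<forall>e\<in>E. \<exists>u v. e = {u, v} \<and> u \<noteq> v \<and> u < n \<and> v < n)"

definition neighbor_graphs :: "nat set set \<Rightarrow> nat set set \<Rightarrow> bool" where
  "neighbor_graphs E E' \<longleftrightarrow> card ((E - E') \<union> (E' - E)) = 1"

definition deg :: "nat set set \<Rightarrow> nat \<Rightarrow> nat" where
  "deg E v = card {u. {u, v} \<in> E}"

definition cut_val :: "nat set set \<Rightarrow> nat set \<Rightarrow> nat" where
  "cut_val H A = card {e\<in>H. card (e \<inter> A) = 1}"

definition lap_density :: "real \<Rightarrow> real \<Rightarrow> real" where
  "lap_density b x = exp (- \<bar>x\<bar> / b) / (2 * b)"

definition laplace :: "real \<Rightarrow> real measure" where
  "laplace b = density lborel (\<lambda>x. ennreal (lap_density b x))"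

definition dlap :: "real \<Rightarrow> int pmf" where
  "dlap eps0 = embed_pmf (\<lambda>z. (exp eps0 - 1) / (exp eps0 + 1) * exp (- eps0 * real_of_int \<bar>z\<bar>))"

definition exp_mech_cut :: "real \<Rightarrow> nat set \<Rightarrow> nat set set \<Rightarrow> nat set pmf" where
  "exp_mech_cut eps C H = embed_pmf (\<lambda>A. if A \<subseteq> C
      then exp (eps * real (cut_val H A) / 6) / (\<Sum>B\<in>Pow C. exp (eps * real (cut_val H B) / 6))
      else 0)"

text \<open>Algorithm A_{eps'}: output is the set of vertices v with c(v) = +1.
  A sign vector in {\<plusminus>1}^[n] is represented by its set of +1 vertices.\<close>
definition alg_A :: "real \<Rightarrow> nat \<Rightarrow> nat set set \<Rightarrow> nat set pmf" where
  "alg_A eps' n E =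
    (let eps0 = eps' / 2 in
     bind_pmf (pmf_of_set (Pow {0..<n})) (\<lambda>P1.
     bind_pmf (pmf_of_set (Pow {0..<n})) (\<lambda>P2.
     bind_pmf (Pi_pmf {0..<n} 0 (\<lambda>_. dlap eps0)) (\<lambda>\<zeta>.
       return_pmf {v\<in>{0..<n}.
         if int (card {u. {u, v} \<in> E \<and> (u \<in> P1 \<longleftrightarrow> v \<in> P1)})
              - \<lceil>(real (deg E v) - 1) / 2\<rceil> + \<zeta> v \<le> 0
         then v \<in> P1 else v \<in> P2}))))"

definition S1_dist :: "real \<Rightarrow> nat \<Rightarrow> nat set set \<Rightarrow> nat set \<Rightarrow> nat set pmf" where
  "S1_dist eps n E C =
     bind_pmf (exp_mech_cut eps C {e\<in>E. e \<subseteq> C}) (\<lambda>A.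
     bind_pmf (pmf_of_set (Pow ({0..<n} - C))) (\<lambda>B. return_pmf (A \<union> B)))"

definition mech :: "real \<Rightarrow> nat \<Rightarrow> nat set set \<Rightarrow> nat set measure" where
  "mech eps n E =
    (let d = 10000 / eps\<^sup>2 in
     bind (PiM {0..<n} (\<lambda>_. laplace (3 / eps))) (\<lambda>x.
       let C = {v\<in>{0..<n}. real (deg E v) + x v > d} in
       measure_pmf (bind_pmf (bernoulli_pmf (1/2)) (\<lambda>b.
          if b then S1_dist eps n E C else alg_A (eps / 3) n E))))"

end

theory Submission
  imports Defs
begin

lemma lap_meas[measurable]: "(\<lambda>x. lap_density b x) \<in> borel_measurable borel"
  unfolding lap_density_def by measurable

lemma sets_laplace[simp, measurable_cong]: "sets (laplace b) = sets borel"
  unfolding laplace_def by simp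

lemma space_laplace[simp]: "space (laplace b) = UNIV"
  unfolding laplace_def by simp

lemma lap_ratio:
  assumes "b > 0"
  shows "lap_density b (y - c) \<le> exp (\<bar>c\<bar> / b) * lap_density b y"
proof -
  have h: "- \<bar>y - c\<bar> \<le> \<bar>c\<bar> - \<bar>y\<bar>" by arith
  have "- \<bar>y - c\<bar> / b \<le> (\<bar>c\<bar> - \<bar>y\<bar>) / b"
    using divide_right_mono[OF h] assms by simp
  then have "- \<bar>y - c\<bar> / b \<le> \<bar>c\<bar> / b + - \<bar>y\<bar> / b"
    by (simp add: diff_divide_distrib)
  then have "exp (- \<bar>y - c\<bar> / b) \<le> exp (\<bar>c\<bar> / b) * exp (- \<bar>y\<bar> / b)"
    by (simp flip: exp_add)
  then show ?thesis unfolding lap_density_def using assms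
    by (simp add: divide_right_mono)
qed

lemma lap_shift:
  fixes b c :: real assumes b: "b>0"
  assumes G[measurable]: "G \<in> borel_measurable borel"
  shows "(\<integral>\<^sup>+y. G (y + c) \<partial>laplace b) \<le> ennreal (exp (\<bar>c\<bar>/b)) * (\<integral>\<^sup>+y. G y \<partial>laplace b)"
proof -
  have "(\<integral>\<^sup>+y. G (y + c) \<partial>laplace b) = (\<integral>\<^sup>+y. ennreal (lap_density b y) * G (y + c) \<partial>lborel)"
    unfolding laplace_def by (subst nn_integral_density) auto
  also have "\<dots> = (\<integral>\<^sup>+y. ennreal (lap_density b (y - c)) * G y \<partial>lborel)"
    using nn_integral_real_affine[of "\<lambda>y. ennreal (lap_density b (y - c)) * G y" 1 c]
    by (simp add: add.commute)
  also have "\<dots> \<le> (\<integral>\<^sup>+y. ennreal (exp (\<bar>c\<bar>/b)) * (ennreal (lap_density b y) * G y) \<partial>lborel)"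
  proof (intro nn_integral_mono)
    fix y
    have "ennreal (lap_density b (y - c)) \<le> ennreal (exp (\<bar>c\<bar>/b)) * ennreal (lap_density b y)"
    proof -
      have "0 \<le> lap_density b y" using b by (simp add: lap_density_def)
      then have "ennreal (exp (\<bar>c\<bar>/b) * lap_density b y) = ennreal (exp (\<bar>c\<bar>/b)) * ennreal (lap_density b y)"
        by (simp add: ennreal_mult)
      with lap_ratio[OF b, of y c] show ?thesis by (metis ennreal_leI)
    qed
    then show "ennreal (lap_density b (y - c)) * G y \<le> ennreal (exp (\<bar>c\<bar>/b)) * (ennreal (lap_density b y) * G y)"
      by (metis mult.assoc mult_right_mono zero_le)
  qed
  also have "\<dots> = ennreal (exp (\<bar>c\<bar>/b)) * (\<integral>\<^sup>+y. ennreal (lap_density b y) * G y \<partial>lborel)"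
    by (subst nn_integral_cmult) auto
  also have "(\<integral>\<^sup>+y. ennreal (lap_density b y) * G y \<partial>lborel) = (\<integral>\<^sup>+y. G y \<partial>laplace b)"
    unfolding laplace_def by (subst nn_integral_density) auto
  finally show ?thesis .
qed

lemma sigma_finite_laplace: "sigma_finite_measure (laplace b)"
  unfolding laplace_def
  by (subst sigma_finite_measure.sigma_finite_iff_density_finite[OF sigma_finite_lborel]) simp_all

lemma pim_shift:
  assumes b: "b>0" and I: "finite I" "i \<in> I"
    and F: "F \<in> borel_measurable (PiM I (\<lambda>_. laplace b))"
  shows "(\<integral>\<^sup>+x. F (x(i := x i + c)) \<partial>PiM I (\<lambda>_. laplace b))
     \<le> ennreal (exp (\<bar>c\<bar>/b)) * (\<integral>\<^sup>+x. F x \<partial>PiM I (\<lambda>_. laplace b))"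
proof -
  interpret product_sigma_finite "\<lambda>_. laplace b"
    by (simp add: product_sigma_finite_def sigma_finite_laplace)
  define J where "J = I - {i}"
  have IJ: "I = insert i J" "i \<notin> J" "finite J" using I by (auto simp: J_def)
  have Fm: "F \<in> borel_measurable (PiM (insert i J) (\<lambda>_. laplace b))" using F IJ by simp
  have upd: "(\<lambda>x. x(i := x i + c)) \<in> measurable (PiM (insert i J) (\<lambda>_. laplace b)) (PiM (insert i J) (\<lambda>_. laplace b))"
    by (rule measurable_PiM_single') (auto simp: space_PiM PiE_iff)
  have Fm2: "(\<lambda>x. F (x(i := x i + c))) \<in> borel_measurable (PiM (insert i J) (\<lambda>_. laplace b))"
    using measurable_comp[OF upd Fm] by (simp add: comp_def)
  have pm: "(\<lambda>p. (fst p)(i := snd p)) \<in> measurable (PiM J (\<lambda>_. laplace b) \<Otimes>\<^sub>M laplace b) (PiM (insert i J) (\<lambda>_. laplace b))"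
  proof (rule measurable_PiM_single')
    fix j assume "j \<in> insert i J"
    show "(\<lambda>p. ((fst p)(i := snd p)) j) \<in> measurable (PiM J (\<lambda>_. laplace b) \<Otimes>\<^sub>M laplace b) (laplace b)"
    proof (cases "j = i")
      case True then show ?thesis by simp
    next
      case False
      with \<open>j \<in> insert i J\<close> have "j \<in> J" by simp
      with False show ?thesis by simp
    qed
  qed (auto simp: space_PiM PiE_iff space_pair_measure extensional_def split: if_splits)
  have "case_prod (\<lambda>x y. F (x(i := y))) \<in> borel_measurable (PiM J (\<lambda>_. laplace b) \<Otimes>\<^sub>M laplace b)"
    using measurable_comp[OF pm Fm] by (simp add: comp_def split_beta')
  then have inner: "(\<lambda>x. \<integral>\<^sup>+y. F (x(i := y)) \<partial>laplace b) \<in> borel_measurable (PiM J (\<lambda>_. laplace b))"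
    by (rule sigma_finite_measure.borel_measurable_nn_integral[OF sigma_finite_laplace])
  have "(\<integral>\<^sup>+x. F (x(i := x i + c)) \<partial>PiM I (\<lambda>_. laplace b))
      = (\<integral>\<^sup>+x. \<integral>\<^sup>+y. F (x(i := y + c)) \<partial>laplace b \<partial>PiM J (\<lambda>_. laplace b))"
    unfolding IJ(1) by (subst product_nn_integral_insert[OF IJ(3,2) Fm2]) simp
  also have "\<dots> \<le> (\<integral>\<^sup>+x. ennreal (exp (\<bar>c\<bar>/b)) * \<integral>\<^sup>+y. F (x(i := y)) \<partial>laplace b \<partial>PiM J (\<lambda>_. laplace b))"
  proof (intro nn_integral_mono)
    fix x assume x: "x \<in> space (PiM J (\<lambda>_. laplace b))"
    have "(\<lambda>y. F (x(i := y))) \<in> borel_measurable borel"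
      using measurable_comp[OF measurable_component_update[OF x IJ(2)] Fm]
      unfolding comp_def by (subst (asm) measurable_cong_sets[OF sets_laplace refl])
    from lap_shift[OF b this, of c]
    show "(\<integral>\<^sup>+y. F (x(i := y + c)) \<partial>laplace b) \<le> ennreal (exp (\<bar>c\<bar>/b)) * \<integral>\<^sup>+y. F (x(i := y)) \<partial>laplace b"
      by simp
  qed
  also have "\<dots> = ennreal (exp (\<bar>c\<bar>/b)) * (\<integral>\<^sup>+x. \<integral>\<^sup>+y. F (x(i := y)) \<partial>laplace b \<partial>PiM J (\<lambda>_. laplace b))"
    by (rule nn_integral_cmult[OF inner])
  also have "(\<integral>\<^sup>+x. \<integral>\<^sup>+y. F (x(i := y)) \<partial>laplace b \<partial>PiM J (\<lambda>_. laplace b)) = (\<integral>\<^sup>+x. F x \<partial>PiM I (\<lambda>_. laplace b))"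
    unfolding IJ(1) by (rule product_nn_integral_insert[OF IJ(3,2) Fm, symmetric])
  finally show ?thesis .
qed

definition dl :: "real \<Rightarrow> int \<Rightarrow> real" where
  "dl a z = (exp a - 1) / (exp a + 1) * exp (- a * real_of_int \<bar>z\<bar>)"

lemma dl_nonneg: "a > 0 \<Longrightarrow> 0 \<le> dl a z"
  unfolding dl_def by (intro mult_nonneg_nonneg divide_nonneg_nonneg) auto

lemma dl_sum:
  assumes a: "a > 0"
  shows "(\<integral>\<^sup>+z. ennreal (dl a z) \<partial>count_space UNIV) = 1"
proof -
  define c where "c = (exp a - 1) / (exp a + 1)"
  define q where "q = exp (- a)"
  have c0: "0 \<le> c" using a by (simp add: c_def)
  have q0: "0 \<le> q" "q < 1" using a by (auto simp: q_def)
  have pos: "(\<lambda>n::nat. ennreal (dl a (int n))) = (\<lambda>n. ennreal (c * q ^ n))"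
    by (auto simp: dl_def c_def q_def exp_of_nat_mult[symmetric] mult.commute)
  have neg: "(\<lambda>n::nat. ennreal (dl a (- int n - 1))) = (\<lambda>n. ennreal ((c * q) * q ^ n))"
  proof
    fix n :: nat
    have "exp (- a * real_of_int \<bar>- int n - 1\<bar>) = q * q ^ n"
      by (simp add: q_def exp_of_nat_mult[symmetric] algebra_simps flip: exp_add)
    then show "ennreal (dl a (- int n - 1)) = ennreal ((c * q) * q ^ n)"
      by (simp add: dl_def c_def mult.assoc)
  qed
  have sp: "(\<Sum>n. ennreal (c * q ^ n)) = ennreal (c * (1 / (1 - q)))"
    using q0 c0 by (subst suminf_ennreal2) (auto intro!: summable_mult summable_geometric simp: suminf_mult suminf_geometric)
  have sn: "(\<Sum>n. ennreal ((c * q) * q ^ n)) = ennreal ((c * q) * (1 / (1 - q)))"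
    using q0 c0 by (subst suminf_ennreal2) (auto intro!: summable_mult summable_geometric simp: suminf_mult suminf_geometric)
  have b1: "bij_betw int UNIV {0::int..}"
    by (auto simp: bij_betw_def inj_on_def image_def intro!: exI[of _ "nat _"])
  have b2: "bij_betw (\<lambda>n::nat. - int n - 1) UNIV {..<0::int}"
    unfolding bij_betw_def inj_on_def image_def
    by (auto intro!: exI[of _ "nat (- _ - 1)"])
  have "(\<integral>\<^sup>+z. ennreal (dl a z) \<partial>count_space UNIV)
     = (\<integral>\<^sup>+z. ennreal (dl a z) * indicator {0..} z + ennreal (dl a z) * indicator {..<0} z \<partial>count_space UNIV)"
    by (intro nn_integral_cong) (auto split: split_indicator)
  also have "\<dots> = (\<integral>\<^sup>+z. ennreal (dl a z) \<partial>count_space {0..}) + (\<integral>\<^sup>+z. ennreal (dl a z) \<partial>count_space {..<0})"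
    by (subst nn_integral_add) (auto simp: nn_integral_count_space_indicator)
  also have "(\<integral>\<^sup>+z. ennreal (dl a z) \<partial>count_space {0..}) = (\<integral>\<^sup>+n. ennreal (dl a (int n)) \<partial>count_space UNIV)"
    by (rule nn_integral_bij_count_space[OF b1, symmetric])
  also have "(\<integral>\<^sup>+z. ennreal (dl a z) \<partial>count_space {..<0}) = (\<integral>\<^sup>+n. ennreal (dl a (- int n - 1)) \<partial>count_space UNIV)"
    by (rule nn_integral_bij_count_space[OF b2, symmetric])
  also have "(\<integral>\<^sup>+n. ennreal (dl a (int n)) \<partial>count_space UNIV) + (\<integral>\<^sup>+n. ennreal (dl a (- int n - 1)) \<partial>count_space UNIV)
      = ennreal (c * (1 / (1 - q)) + (c * q) * (1 / (1 - q)))"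
    unfolding nn_integral_count_space_nat pos neg sp sn using q0 c0 by (simp add: ennreal_plus)
  also have "c * (1 / (1 - q)) + (c * q) * (1 / (1 - q)) = 1"
  proof -
    have e: "exp a > 1" using a by simp
    have qq: "q = 1 / exp a" by (simp add: q_def exp_minus field_simps)
    have "c * (1 / (1 - q)) + (c * q) * (1 / (1 - q)) = c * ((1 + q) / (1 - q))"
      by (simp add: algebra_simps add_divide_distrib)
    also have "(1 + q) / (1 - q) = (exp a + 1) / (exp a - 1)"
      unfolding qq using e by (simp add: field_simps)
    also have "c * ((exp a + 1) / (exp a - 1)) = 1"
    proof -
      have "1 < exp a * exp a" using e by (rule less_1_mult[OF e])
      then show ?thesis unfolding c_def using e by (simp add: field_simps)
    qed
    finally show ?thesis .
  qed
  finally show ?thesis by simp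
qed

lemma pmf_dlap: "a > 0 \<Longrightarrow> pmf (dlap a) z = dl a z"
  unfolding dlap_def dl_def[symmetric]
  by (rule pmf_embed_pmf) (auto simp: dl_nonneg dl_sum)

lemma dl_ratio:
  assumes a: "a > 0"
  shows "dl a (z + d) \<le> exp (a * \<bar>real_of_int d\<bar>) * dl a z"
proof -
  have "\<bar>real_of_int z\<bar> \<le> \<bar>real_of_int (z + d)\<bar> + \<bar>real_of_int d\<bar>" by simp
  then have "- a * \<bar>real_of_int (z + d)\<bar> \<le> a * \<bar>real_of_int d\<bar> + - a * \<bar>real_of_int z\<bar>"
    using a by (simp add: algebra_simps) (metis mult_left_mono less_imp_le a distrib_left)
  then have "exp (- a * \<bar>real_of_int (z + d)\<bar>) \<le> exp (a * \<bar>real_of_int d\<bar>) * exp (- a * \<bar>real_of_int z\<bar>)"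
    by (simp flip: exp_add)
  moreover have "0 \<le> (exp a - 1) / (exp a + 1)" using a by simp
  ultimately show ?thesis unfolding dl_def
    by (metis (no_types, lifting) mult.left_commute mult_left_mono of_int_abs)
qed

lemma Pi_dlap_ratio:
  assumes a: "a > 0" and I: "finite I" and \<delta>: "\<And>v. v \<notin> I \<Longrightarrow> \<delta> v = 0"
  shows "pmf (Pi_pmf I 0 (\<lambda>_. dlap a)) (\<lambda>v. \<eta> v + \<delta> v)
     \<le> exp (a * (\<Sum>v\<in>I. \<bar>real_of_int (\<delta> v)\<bar>)) * pmf (Pi_pmf I 0 (\<lambda>_. dlap a)) \<eta>"
proof (cases "\<forall>x. x \<notin> I \<longrightarrow> \<eta> x = 0")
  case True
  then have T2: "\<forall>x. x \<notin> I \<longrightarrow> \<eta> x + \<delta> x = 0" using \<delta> by simp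
  have "(\<Prod>x\<in>I. dl a (\<eta> x + \<delta> x)) \<le> (\<Prod>x\<in>I. exp (a * \<bar>real_of_int (\<delta> x)\<bar>) * dl a (\<eta> x))"
    by (intro prod_mono conjI dl_ratio a dl_nonneg)
  also have "\<dots> = exp (a * (\<Sum>v\<in>I. \<bar>real_of_int (\<delta> v)\<bar>)) * (\<Prod>x\<in>I. dl a (\<eta> x))"
    using I by (simp add: prod.distrib exp_sum sum_distrib_left)
  finally show ?thesis using True T2 I by (simp add: pmf_Pi pmf_dlap a)
next
  case False
  then have "\<not> (\<forall>x. x \<notin> I \<longrightarrow> \<eta> x + \<delta> x = 0)" using \<delta> by auto
  then have "pmf (Pi_pmf I 0 (\<lambda>_. dlap a)) (\<lambda>v. \<eta> v + \<delta> v) = 0"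
    using I by (subst pmf_Pi) auto
  then show ?thesis by simp
qed


lemma bind_pmf_ratio:
  assumes "\<And>x. pmf p x \<le> k * pmf q x" "0 \<le> k"
  shows "emeasure (measure_pmf (bind_pmf p f)) T \<le> ennreal k * emeasure (measure_pmf (bind_pmf q f)) T"
proof -
  have "emeasure (measure_pmf (bind_pmf p f)) T = (\<integral>\<^sup>+x. ennreal (pmf p x) * emeasure (f x) T \<partial>count_space UNIV)"
    by (simp add: nn_integral_measure_pmf)
  also have "\<dots> \<le> (\<integral>\<^sup>+x. ennreal k * (ennreal (pmf q x) * emeasure (f x) T) \<partial>count_space UNIV)"
  proof (intro nn_integral_mono)
    fix x
    have "ennreal (pmf p x) \<le> ennreal k * ennreal (pmf q x)"
      using assms by (simp add: ennreal_mult[symmetric] ennreal_leI)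
    then show "ennreal (pmf p x) * emeasure (f x) T \<le> ennreal k * (ennreal (pmf q x) * emeasure (f x) T)"
      by (metis mult.assoc mult_right_mono zero_le)
  qed
  also have "\<dots> = ennreal k * (\<integral>\<^sup>+x. ennreal (pmf q x) * emeasure (f x) T \<partial>count_space UNIV)"
    by (subst nn_integral_cmult) auto
  also have "(\<integral>\<^sup>+x. ennreal (pmf q x) * emeasure (f x) T \<partial>count_space UNIV) = emeasure (measure_pmf (bind_pmf q f)) T"
    by (simp add: nn_integral_measure_pmf)
  finally show ?thesis .
qed

lemma bind_pmf_mono:
  assumes "\<And>x. emeasure (measure_pmf (f x)) T \<le> ennreal k * emeasure (measure_pmf (g x)) T"
  shows "emeasure (measure_pmf (bind_pmf p f)) T \<le> ennreal k * emeasure (measure_pmf (bind_pmf p g)) T"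
proof -
  have "emeasure (measure_pmf (bind_pmf p f)) T = (\<integral>\<^sup>+x. emeasure (f x) T \<partial>p)" by simp
  also have "\<dots> \<le> (\<integral>\<^sup>+x. ennreal k * emeasure (g x) T \<partial>p)"
    by (intro nn_integral_mono assms)
  also have "\<dots> = ennreal k * (\<integral>\<^sup>+x. emeasure (g x) T \<partial>p)"
    by (subst nn_integral_cmult) auto
  finally show ?thesis by simp
qed

lemma bind_pmf_bij:
  assumes b: "bij g" and r: "\<And>y. pmf p (g y) \<le> k * pmf p y" and k: "0 \<le> k"
    and fg: "\<And>y. f1 (g y) = f2 y"
  shows "emeasure (measure_pmf (bind_pmf p f1)) T \<le> ennreal k * emeasure (measure_pmf (bind_pmf p f2)) T"
proof -
  have "emeasure (measure_pmf (bind_pmf p f1)) T = (\<integral>\<^sup>+x. ennreal (pmf p x) * emeasure (f1 x) T \<partial>count_space UNIV)"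
    by (simp add: nn_integral_measure_pmf)
  also have "\<dots> = (\<integral>\<^sup>+y. ennreal (pmf p (g y)) * emeasure (f1 (g y)) T \<partial>count_space UNIV)"
    by (rule nn_integral_bij_count_space[OF b, symmetric])
  also have "\<dots> \<le> (\<integral>\<^sup>+y. ennreal k * (ennreal (pmf p y) * emeasure (f2 y) T) \<partial>count_space UNIV)"
  proof (intro nn_integral_mono)
    fix y
    have "ennreal (pmf p (g y)) \<le> ennreal k * ennreal (pmf p y)"
      using r[of y] k by (simp add: ennreal_mult[symmetric] ennreal_leI)
    then show "ennreal (pmf p (g y)) * emeasure (f1 (g y)) T \<le> ennreal k * (ennreal (pmf p y) * emeasure (f2 y) T)"
      unfolding fg by (metis mult.assoc mult_right_mono zero_le)
  qed
  also have "\<dots> = ennreal k * (\<integral>\<^sup>+x. ennreal (pmf p x) * emeasure (f2 x) T \<partial>count_space UNIV)"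
    by (subst nn_integral_cmult) auto
  also have "(\<integral>\<^sup>+x. ennreal (pmf p x) * emeasure (f2 x) T \<partial>count_space UNIV) = emeasure (measure_pmf (bind_pmf p f2)) T"
    by (simp add: nn_integral_measure_pmf)
  finally show ?thesis .
qed

lemma card_insert_filter:
  assumes "finite E" "e \<notin> E"
  shows "card {x\<in>insert e E. R x} = card {x\<in>E. R x} + (if R e then 1 else 0)"
proof (cases "R e")
  case True
  then have "{x\<in>insert e E. R x} = insert e {x\<in>E. R x}" by auto
  then show ?thesis using True assms by simp
next
  case False
  then have "{x\<in>insert e E. R x} = {x\<in>E. R x}" by auto
  then show ?thesis using False by simp
qed

lemma finite_nbr: "finite E \<Longrightarrow> finite {x. {x, v} \<in> E \<and> Q x}"
proof -
  assume "finite E"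
  moreover have "inj (\<lambda>x. {x, v})" by (auto simp: inj_def doubleton_eq_iff)
  ultimately have "finite ((\<lambda>x. {x, v}) -` E)" by (rule finite_vimageI)
  then show ?thesis by (rule rev_finite_subset) auto
qed

lemma card_nbr_insert:
  assumes "finite E" "{u, w} \<notin> E" "u \<noteq> w"
  shows "card {x. {x, v} \<in> insert {u, w} E \<and> Q x}
       = card {x. {x, v} \<in> E \<and> Q x} + (if (v = u \<and> Q w) \<or> (v = w \<and> Q u) then 1 else 0)"
proof -
  have eq: "{x. {x, v} \<in> insert {u, w} E \<and> Q x} = {x. {x, v} \<in> E \<and> Q x} \<union> {x. {x, v} = {u, w} \<and> Q x}"
    by auto
  have S: "{x. {x, v} = {u, w} \<and> Q x} = (if v = u \<and> Q w then {w} else if v = w \<and> Q u then {u} else {})"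
    using assms(3) by (auto simp: doubleton_eq_iff)
  have d: "{x. {x, v} \<in> E \<and> Q x} \<inter> {x. {x, v} = {u, w} \<and> Q x} = {}" using assms(2) by auto
  show ?thesis unfolding eq
    by (subst card_Un_disjoint[OF finite_nbr[OF assms(1)] _ d]) (use S assms(3) in auto)
qed

lemma ceil_step:
  fixes x :: real
  shows "\<lceil>x\<rceil> \<le> \<lceil>x + 1/2\<rceil> \<and> \<lceil>x + 1/2\<rceil> \<le> \<lceil>x\<rceil> + 1"
proof
  show "\<lceil>x\<rceil> \<le> \<lceil>x + 1/2\<rceil>" by (intro ceiling_mono) simp
  have "\<lceil>x + 1/2\<rceil> \<le> \<lceil>x + 1\<rceil>" by (intro ceiling_mono) simp
  then show "\<lceil>x + 1/2\<rceil> \<le> \<lceil>x\<rceil> + 1" by simp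
qed

definition tval :: "nat set set \<Rightarrow> nat set \<Rightarrow> nat \<Rightarrow> int" where
  "tval E P v = int (card {u. {u, v} \<in> E \<and> (u \<in> P \<longleftrightarrow> v \<in> P)}) - \<lceil>(real (deg E v) - 1) / 2\<rceil>"

lemma tval_insert:
  assumes "finite E" "{u, w} \<notin> E" "u \<noteq> w"
  shows "\<bar>tval (insert {u, w} E) P v - tval E P v\<bar> \<le> 1"
    and "v \<noteq> u \<Longrightarrow> v \<noteq> w \<Longrightarrow> tval (insert {u, w} E) P v = tval E P v"
proof -
  have dg: "deg (insert {u, w} E) v = deg E v + (if v = u \<or> v = w then 1 else 0)"
    unfolding deg_def using card_nbr_insert[OF assms, of v "\<lambda>_. True"] by simp
  have lg: "card {x. {x, v} \<in> insert {u, w} E \<and> (x \<in> P \<longleftrightarrow> v \<in> P)}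
     = card {x. {x, v} \<in> E \<and> (x \<in> P \<longleftrightarrow> v \<in> P)} + (if (v = u \<and> (w \<in> P \<longleftrightarrow> v \<in> P)) \<or> (v = w \<and> (u \<in> P \<longleftrightarrow> v \<in> P)) then 1 else 0)"
    by (rule card_nbr_insert[OF assms])
  show "v \<noteq> u \<Longrightarrow> v \<noteq> w \<Longrightarrow> tval (insert {u, w} E) P v = tval E P v"
    unfolding tval_def using dg lg by simp
  show "\<bar>tval (insert {u, w} E) P v - tval E P v\<bar> \<le> 1"
  proof (cases "v = u \<or> v = w")
    case False then show ?thesis unfolding tval_def using dg lg by simp
  next
    case True
    have "(real (deg (insert {u, w} E) v) - 1) / 2 = (real (deg E v) - 1) / 2 + 1/2"
      using True dg by (simp add: field_simps)
    then have c: "\<lceil>(real (deg E v) - 1) / 2\<rceil> \<le> \<lceil>(real (deg (insert {u, w} E) v) - 1) / 2\<rceil>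
       \<and> \<lceil>(real (deg (insert {u, w} E) v) - 1) / 2\<rceil> \<le> \<lceil>(real (deg E v) - 1) / 2\<rceil> + 1"
      using ceil_step by presburger
    show ?thesis unfolding tval_def using lg c by (simp split: if_splits)
  qed
qed



definition adj1 :: "nat set set \<Rightarrow> nat set set \<Rightarrow> nat \<Rightarrow> nat \<Rightarrow> bool" where
  "adj1 E E' u w \<longleftrightarrow> finite E \<and> {u, w} \<notin> E \<and> u \<noteq> w \<and> E' = insert {u, w} E"

lemma tval_adj:
  assumes "adj1 E E' u w \<or> adj1 E' E u w"
  shows "\<bar>tval E' P v - tval E P v\<bar> \<le> 1"
    and "v \<noteq> u \<Longrightarrow> v \<noteq> w \<Longrightarrow> tval E' P v = tval E P v"
proof -
  have "\<bar>tval E' P v - tval E P v\<bar> \<le> 1 \<and> (v \<noteq> u \<longrightarrow> v \<noteq> w \<longrightarrow> tval E' P v = tval E P v)"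
  proof (cases "adj1 E E' u w")
    case True
    then have a: "finite E" "{u, w} \<notin> E" "u \<noteq> w" and E': "E' = insert {u, w} E"
      unfolding adj1_def by auto
    show ?thesis unfolding E' using tval_insert[OF a, where P=P and v=v] by blast
  next
    case False
    with assms have "adj1 E' E u w" by blast
    then have a: "finite E'" "{u, w} \<notin> E'" "u \<noteq> w" and E: "E = insert {u, w} E'"
      unfolding adj1_def by auto
    have "\<bar>tval E P v - tval E' P v\<bar> \<le> 1"
      unfolding E by (rule tval_insert(1)[OF a])
    then have "\<bar>tval E' P v - tval E P v\<bar> \<le> 1" by linarith
    moreover have "v \<noteq> u \<longrightarrow> v \<noteq> w \<longrightarrow> tval E' P v = tval E P v"
      unfolding E using tval_insert(2)[OF a, where P=P and v=v] by auto
    ultimately show ?thesis by blast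
  qed
  then show "\<bar>tval E' P v - tval E P v\<bar> \<le> 1" and "v \<noteq> u \<Longrightarrow> v \<noteq> w \<Longrightarrow> tval E' P v = tval E P v"
    by auto
qed

lemma inner_dp:
  assumes adj: "adj1 E E' u w \<or> adj1 E' E u w" and uw: "u < n" "w < n" and e: "eps' > 0"
  shows "emeasure (measure_pmf (bind_pmf (Pi_pmf {0..<n} 0 (\<lambda>_. dlap (eps' / 2))) (\<lambda>\<zeta>.
       return_pmf {v\<in>{0..<n}.
         if int (card {u. {u, v} \<in> E \<and> (u \<in> P1 \<longleftrightarrow> v \<in> P1)})
              - \<lceil>(real (deg E v) - 1) / 2\<rceil> + \<zeta> v \<le> 0
         then v \<in> P1 else v \<in> P2}))) T
    \<le> ennreal (exp eps') * emeasure (measure_pmf (bind_pmf (Pi_pmf {0..<n} 0 (\<lambda>_. dlap (eps' / 2))) (\<lambda>\<zeta>.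
       return_pmf {v\<in>{0..<n}.
         if int (card {u. {u, v} \<in> E' \<and> (u \<in> P1 \<longleftrightarrow> v \<in> P1)})
              - \<lceil>(real (deg E' v) - 1) / 2\<rceil> + \<zeta> v \<le> 0
         then v \<in> P1 else v \<in> P2}))) T"
proof -
  define \<delta> where "\<delta> v = tval E' P1 v - tval E P1 v" for v
  have d0: "\<delta> v = 0" if "v \<noteq> u" "v \<noteq> w" for v
    using tval_adj(2)[OF adj that] by (simp add: \<delta>_def)
  have d1: "\<bar>real_of_int (\<delta> v)\<bar> \<le> 1" for v
    using tval_adj(1)[OF adj, of P1 v] unfolding \<delta>_def by linarith
  have b: "bij (\<lambda>\<eta> v. \<eta> v + \<delta> v)"
    by (rule bij_betwI[where g = "\<lambda>\<eta> v. \<eta> v - \<delta> v"]) auto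
  have "(\<Sum>v\<in>{0..<n}. \<bar>real_of_int (\<delta> v)\<bar>) = (\<Sum>v\<in>{u, w}. \<bar>real_of_int (\<delta> v)\<bar>)"
    using uw d0 by (intro sum.mono_neutral_right) auto
  also have "\<dots> \<le> real (card {u, w}) * 1"
    using d1 by (intro sum_bounded_above) auto
  also have "\<dots> \<le> 2" by (simp add: card_insert_le_m1)
  finally have s2: "(\<Sum>v\<in>{0..<n}. \<bar>real_of_int (\<delta> v)\<bar>) \<le> 2" .
  have r: "pmf (Pi_pmf {0..<n} 0 (\<lambda>_. dlap (eps' / 2))) (\<lambda>v. \<eta> v + \<delta> v) \<le> exp eps' * pmf (Pi_pmf {0..<n} 0 (\<lambda>_. dlap (eps' / 2))) \<eta>" for \<eta>
  proof -
    have "pmf (Pi_pmf {0..<n} 0 (\<lambda>_. dlap (eps' / 2))) (\<lambda>v. \<eta> v + \<delta> v)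
       \<le> exp (eps' / 2 * (\<Sum>v\<in>{0..<n}. \<bar>real_of_int (\<delta> v)\<bar>)) * pmf (Pi_pmf {0..<n} 0 (\<lambda>_. dlap (eps' / 2))) \<eta>"
      using e uw d0 by (intro Pi_dlap_ratio) auto
    also have "\<dots> \<le> exp eps' * pmf (Pi_pmf {0..<n} 0 (\<lambda>_. dlap (eps' / 2))) \<eta>"
    proof -
      have "eps' / 2 * (\<Sum>v\<in>{0..<n}. \<bar>real_of_int (\<delta> v)\<bar>) \<le> eps' / 2 * 2"
        by (rule mult_left_mono[OF s2]) (use e in simp)
      then have "exp (eps' / 2 * (\<Sum>v\<in>{0..<n}. \<bar>real_of_int (\<delta> v)\<bar>)) \<le> exp eps'" by simp
      then show ?thesis by (rule mult_right_mono) simp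
    qed
    finally show ?thesis .
  qed
  have key: "(int (card {u. {u, v} \<in> E \<and> (u \<in> P1 \<longleftrightarrow> v \<in> P1)})
              - \<lceil>(real (deg E v) - 1) / 2\<rceil> + (\<eta> v + \<delta> v) \<le> 0) \<longleftrightarrow>
       (int (card {u. {u, v} \<in> E' \<and> (u \<in> P1 \<longleftrightarrow> v \<in> P1)})
              - \<lceil>(real (deg E' v) - 1) / 2\<rceil> + \<eta> v \<le> 0)" for \<eta> v
    unfolding \<delta>_def tval_def by linarith
  show ?thesis
    by (rule bind_pmf_bij[OF b r]) (simp_all only: key exp_ge_zero)
qed

lemma algA_dp:
  assumes adj: "adj1 E E' u w \<or> adj1 E' E u w" and uw: "u < n" "w < n" and e: "eps' > 0"
  shows "emeasure (measure_pmf (alg_A eps' n E)) T \<le> ennreal (exp eps') * emeasure (measure_pmf (alg_A eps' n E')) T"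
  unfolding alg_A_def Let_def
  by (intro bind_pmf_mono inner_dp[OF adj uw e])



definition Zc :: "real \<Rightarrow> nat set \<Rightarrow> nat set set \<Rightarrow> real" where
  "Zc eps C H = (\<Sum>B\<in>Pow C. exp (eps * real (cut_val H B) / 6))"

lemma Zc_pos: "finite C \<Longrightarrow> 0 < Zc eps C H"
  unfolding Zc_def by (intro sum_pos) auto

lemma pmf_exp_mech:
  assumes C: "finite C"
  shows "pmf (exp_mech_cut eps C H) A = (if A \<subseteq> C then exp (eps * real (cut_val H A) / 6) / Zc eps C H else 0)"
  unfolding exp_mech_cut_def Zc_def[symmetric]
proof (rule pmf_embed_pmf)
  show "0 \<le> (if x \<subseteq> C then exp (eps * real (cut_val H x) / 6) / Zc eps C H else 0)" for x
    using Zc_pos[OF C, of eps H] by simp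
  have "(\<integral>\<^sup>+x. ennreal (if x \<subseteq> C then exp (eps * real (cut_val H x) / 6) / Zc eps C H else 0) \<partial>count_space UNIV)
      = (\<Sum>x\<in>Pow C. ennreal (if x \<subseteq> C then exp (eps * real (cut_val H x) / 6) / Zc eps C H else 0))"
    using C by (intro nn_integral_count_space') auto
  also have "\<dots> = ennreal (\<Sum>x\<in>Pow C. exp (eps * real (cut_val H x) / 6) / Zc eps C H)"
    using Zc_pos[OF C, of eps H] by (subst sum_ennreal) auto
  also have "(\<Sum>x\<in>Pow C. exp (eps * real (cut_val H x) / 6) / Zc eps C H) = 1"
    using Zc_pos[OF C, of eps H] by (simp add: sum_divide_distrib[symmetric] Zc_def)
  finally show "(\<integral>\<^sup>+x. ennreal (if x \<subseteq> C then exp (eps * real (cut_val H x) / 6) / Zc eps C H else 0) \<partial>count_space UNIV) = 1"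
    by simp
qed

lemma exp_mech_ratio:
  assumes C: "finite C" and e: "eps > 0"
    and d: "\<And>A. \<bar>real (cut_val H A) - real (cut_val H' A)\<bar> \<le> 1"
  shows "pmf (exp_mech_cut eps C H) A \<le> exp (eps / 3) * pmf (exp_mech_cut eps C H') A"
proof (cases "A \<subseteq> C")
  case False then show ?thesis by (simp add: pmf_exp_mech[OF C])
next
  case True
  have w: "exp (eps * real (cut_val H B) / 6) \<le> exp (eps / 6) * exp (eps * real (cut_val H' B) / 6)"
    and w': "exp (eps * real (cut_val H' B) / 6) \<le> exp (eps / 6) * exp (eps * real (cut_val H B) / 6)" for B
  proof -
    have "eps * real (cut_val H B) \<le> eps * (1 + real (cut_val H' B))"
      "eps * real (cut_val H' B) \<le> eps * (1 + real (cut_val H B))"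
      using d[of B] e by (intro mult_left_mono; linarith)+
    then have "eps * real (cut_val H B) / 6 \<le> eps / 6 + eps * real (cut_val H' B) / 6"
      "eps * real (cut_val H' B) / 6 \<le> eps / 6 + eps * real (cut_val H B) / 6"
      by (simp_all add: algebra_simps)
    then show "exp (eps * real (cut_val H B) / 6) \<le> exp (eps / 6) * exp (eps * real (cut_val H' B) / 6)"
      "exp (eps * real (cut_val H' B) / 6) \<le> exp (eps / 6) * exp (eps * real (cut_val H B) / 6)"
      by (simp_all flip: exp_add)
  qed
  have Z: "Zc eps C H' \<le> exp (eps / 6) * Zc eps C H"
    unfolding Zc_def sum_distrib_left by (intro sum_mono w')
  have zp: "0 < Zc eps C H" "0 < Zc eps C H'" using Zc_pos[OF C] by auto
  have iz: "1 / Zc eps C H \<le> exp (eps / 6) / Zc eps C H'"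
    using Z zp by (simp add: field_simps)
  have "exp (eps * real (cut_val H A) / 6) / Zc eps C H
       = exp (eps * real (cut_val H A) / 6) * (1 / Zc eps C H)" by simp
  also have "\<dots> \<le> (exp (eps / 6) * exp (eps * real (cut_val H' A) / 6)) * (exp (eps / 6) / Zc eps C H')"
    using w[of A] iz zp by (intro mult_mono) auto
  also have "\<dots> = (exp (eps / 6) * exp (eps / 6)) * (exp (eps * real (cut_val H' A) / 6) / Zc eps C H')"
    by simp
  also have "exp (eps / 6) * exp (eps / 6) = exp (eps / 3)"
    by (simp flip: exp_add)
  finally show ?thesis using True by (simp add: pmf_exp_mech[OF C])
qed

lemma cut_val_adj:
  assumes "adj1 E E' u w \<or> adj1 E' E u w"
  shows "\<bar>real (cut_val {e\<in>E. e \<subseteq> C} A) - real (cut_val {e\<in>E'. e \<subseteq> C} A)\<bar> \<le> 1"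
proof -
  have cv: "cut_val {e\<in>X. e \<subseteq> C} A = card {e\<in>X. e \<subseteq> C \<and> card (e \<inter> A) = 1}" for X
    unfolding cut_val_def by (rule arg_cong[where f = card]) auto
  show ?thesis
  proof (cases "adj1 E E' u w")
    case True
    then have a: "finite E" "{u, w} \<notin> E" and E': "E' = insert {u, w} E"
      unfolding adj1_def by auto
    show ?thesis unfolding cv E' card_insert_filter[OF a] by simp
  next
    case False
    with assms have "adj1 E' E u w" by blast
    then have a: "finite E'" "{u, w} \<notin> E'" and E: "E = insert {u, w} E'"
      unfolding adj1_def by auto
    show ?thesis unfolding cv E card_insert_filter[OF a] by simp
  qed
qed

lemma S1_dp:
  assumes adj: "adj1 E E' u w \<or> adj1 E' E u w" and C: "finite C" and e: "eps > 0"
  shows "emeasure (measure_pmf (S1_dist eps n E C)) T \<le> ennreal (exp (eps / 3)) * emeasure (measure_pmf (S1_dist eps n E' C)) T"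
  unfolding S1_dist_def
  by (rule bind_pmf_ratio) (auto intro!: exp_mech_ratio[OF C e] cut_val_adj[OF adj])

definition Qd :: "real \<Rightarrow> nat \<Rightarrow> nat set set \<Rightarrow> nat set \<Rightarrow> nat set pmf" where
  "Qd eps n E C = bind_pmf (bernoulli_pmf (1/2)) (\<lambda>b. if b then S1_dist eps n E C else alg_A (eps / 3) n E)"

lemma Qd_dp:
  assumes adj: "adj1 E E' u w \<or> adj1 E' E u w" and uw: "u < n" "w < n" and C: "finite C" and e: "eps > 0"
  shows "emeasure (measure_pmf (Qd eps n E C)) T \<le> ennreal (exp (eps / 3)) * emeasure (measure_pmf (Qd eps n E' C)) T"
  unfolding Qd_def
proof (rule bind_pmf_mono)
  fix b :: bool
  show "emeasure (measure_pmf (if b then S1_dist eps n E C else alg_A (eps / 3) n E)) T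
    \<le> ennreal (exp (eps / 3)) * emeasure (measure_pmf (if b then S1_dist eps n E' C else alg_A (eps / 3) n E')) T"
    using S1_dp[OF adj C e, of n T] algA_dp[OF adj uw, of "eps / 3" T] e by auto
qed



lemma upd_meas:
  assumes "i \<in> I"
  shows "(\<lambda>x. x(i := x i + c)) \<in> measurable (PiM I (\<lambda>_. laplace b)) (PiM I (\<lambda>_. laplace b))"
  using assms by (intro measurable_PiM_single') (auto simp: space_PiM PiE_iff)

lemma pim_shift2:
  assumes b: "b>0" and I: "finite I" "i \<in> I" "j \<in> I" "i \<noteq> j"
    and F: "F \<in> borel_measurable (PiM I (\<lambda>_. laplace b))"
  shows "(\<integral>\<^sup>+x. F ((x(i := x i + c1))(j := x j + c2)) \<partial>PiM I (\<lambda>_. laplace b))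
     \<le> ennreal (exp (\<bar>c1\<bar>/b)) * (ennreal (exp (\<bar>c2\<bar>/b)) * (\<integral>\<^sup>+x. F x \<partial>PiM I (\<lambda>_. laplace b)))"
proof -
  define F1 where "F1 x = F (x(i := x i + c1))" for x
  have F1m: "F1 \<in> borel_measurable (PiM I (\<lambda>_. laplace b))"
    unfolding F1_def using measurable_comp[OF upd_meas[OF I(2)] F] by (simp add: comp_def)
  have eq: "F ((x(i := x i + c1))(j := x j + c2)) = F1 (x(j := x j + c2))" for x
    unfolding F1_def using I(4) by (simp add: fun_upd_twist)
  have 1: "(\<integral>\<^sup>+x. F ((x(i := x i + c1))(j := x j + c2)) \<partial>PiM I (\<lambda>_. laplace b))
      \<le> ennreal (exp (\<bar>c2\<bar>/b)) * (\<integral>\<^sup>+x. F1 x \<partial>PiM I (\<lambda>_. laplace b))"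
    unfolding eq by (rule pim_shift[OF b I(1,3) F1m])
  have 2: "(\<integral>\<^sup>+x. F1 x \<partial>PiM I (\<lambda>_. laplace b)) \<le> ennreal (exp (\<bar>c1\<bar>/b)) * (\<integral>\<^sup>+x. F x \<partial>PiM I (\<lambda>_. laplace b))"
    unfolding F1_def by (rule pim_shift[OF b I(1,2) F])
  have "(\<integral>\<^sup>+x. F ((x(i := x i + c1))(j := x j + c2)) \<partial>PiM I (\<lambda>_. laplace b))
      \<le> ennreal (exp (\<bar>c2\<bar>/b)) * (ennreal (exp (\<bar>c1\<bar>/b)) * (\<integral>\<^sup>+x. F x \<partial>PiM I (\<lambda>_. laplace b)))"
    by (rule order_trans[OF 1 mult_left_mono[OF 2]]) simp
  then show ?thesis by (simp add: ac_simps)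
qed

lemma deg_adj:
  assumes "adj1 E E' u w \<or> adj1 E' E u w"
  shows "\<bar>real (deg E v) - real (deg E' v)\<bar> \<le> 1"
    and "v \<noteq> u \<Longrightarrow> v \<noteq> w \<Longrightarrow> deg E v = deg E' v"
proof -
  have ins: "deg (insert {u, w} X) v = deg X v + (if v = u \<or> v = w then 1 else 0)"
    if "finite X" "{u, w} \<notin> X" "u \<noteq> w" for X
    unfolding deg_def using card_nbr_insert[OF that, of v "\<lambda>_. True"] by auto
  have "\<bar>real (deg E v) - real (deg E' v)\<bar> \<le> 1 \<and> (v \<noteq> u \<longrightarrow> v \<noteq> w \<longrightarrow> deg E v = deg E' v)"
  proof (cases "adj1 E E' u w")
    case True
    then have a: "finite E" "{u, w} \<notin> E" "u \<noteq> w" and E': "E' = insert {u, w} E"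
      unfolding adj1_def by auto
    show ?thesis unfolding E' ins[OF a] by auto
  next
    case False
    with assms have "adj1 E' E u w" by blast
    then have a: "finite E'" "{u, w} \<notin> E'" "u \<noteq> w" and E: "E = insert {u, w} E'"
      unfolding adj1_def by auto
    show ?thesis unfolding E ins[OF a] by auto
  qed
  then show "\<bar>real (deg E v) - real (deg E' v)\<bar> \<le> 1" and "v \<noteq> u \<Longrightarrow> v \<noteq> w \<Longrightarrow> deg E v = deg E' v"
    by auto
qed

lemma graph_finite:
  assumes "graph_on n E" shows "finite E"
proof -
  have "E \<subseteq> (\<lambda>p. {fst p, snd p}) ` ({0..<n} \<times> {0..<n})"
  proof
    fix e assume "e \<in> E"
    then obtain a c where "e = {a, c}" "a < n" "c < n" using assms unfolding graph_on_def by blast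
    then show "e \<in> (\<lambda>p. {fst p, snd p}) ` ({0..<n} \<times> {0..<n})"
      by (auto intro!: image_eqI[where x = "(a, c)"])
  qed
  then show ?thesis by (rule finite_subset) auto
qed

lemma nb_decomp:
  assumes G: "graph_on n E" "graph_on n E'" and N: "neighbor_graphs E E'"
  shows "\<exists>u w. (adj1 E E' u w \<or> adj1 E' E u w) \<and> u < n \<and> w < n"
proof -
  have fin: "finite E" "finite E'" using graph_finite G by auto
  from N obtain e where e: "(E - E') \<union> (E' - E) = {e}"
    unfolding neighbor_graphs_def by (rule card_1_singletonE)
  show ?thesis
  proof (cases "e \<in> E'")
    case True
    with e have "e \<notin> E" "E - E' = {}" by auto
    with True e have E': "E' = insert e E" by auto
    from True G(2) obtain u w where uw: "e = {u, w}" "u \<noteq> w" "u < n" "w < n"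
      unfolding graph_on_def by blast
    have "adj1 E E' u w" unfolding adj1_def using fin \<open>e \<notin> E\<close> uw E' by auto
    with uw show ?thesis by blast
  next
    case False
    with e have "e \<in> E" "E' - E = {}" by auto
    with False e have E: "E = insert e E'" by auto
    from \<open>e \<in> E\<close> G(1) obtain u w where uw: "e = {u, w}" "u \<noteq> w" "u < n" "w < n"
      unfolding graph_on_def by blast
    have "adj1 E' E u w" unfolding adj1_def using fin False uw E by auto
    with uw show ?thesis by blast
  qed
qed

definition Cf :: "real \<Rightarrow> nat \<Rightarrow> nat set set \<Rightarrow> (nat \<Rightarrow> real) \<Rightarrow> nat set" where
  "Cf eps n E x = {v\<in>{0..<n}. real (deg E v) + x v > 10000 / eps\<^sup>2}"

lemma Cf_meas:
  "Cf eps n E \<in> measurable (PiM {0..<n} (\<lambda>_. laplace b)) (count_space (Pow {0..<n}))"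
proof -
  have fin: "finite (Pow {0..<n::nat})" by simp
  show ?thesis unfolding measurable_count_space_eq2[OF fin]
  proof (intro conjI ballI)
    show "Cf eps n E \<in> space (PiM {0..<n} (\<lambda>_. laplace b)) \<rightarrow> Pow {0..<n}"
      by (auto simp: Cf_def)
    fix A assume A: "A \<in> Pow {0..<n}"
    have eqv: "Cf eps n E x = A \<longleftrightarrow> (\<forall>v\<in>{0..<n}. (v \<in> A \<longleftrightarrow> 10000 / eps\<^sup>2 < real (deg E v) + x v))" for x
    proof
      assume "Cf eps n E x = A"
      then show "\<forall>v\<in>{0..<n}. (v \<in> A \<longleftrightarrow> 10000 / eps\<^sup>2 < real (deg E v) + x v)"
        unfolding Cf_def by blast
    next
      assume h: "\<forall>v\<in>{0..<n}. (v \<in> A \<longleftrightarrow> 10000 / eps\<^sup>2 < real (deg E v) + x v)"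
      show "Cf eps n E x = A"
        unfolding Cf_def using h A by blast
    qed
    have "Cf eps n E -` {A} \<inter> space (PiM {0..<n} (\<lambda>_. laplace b))
       = {x \<in> space (PiM {0..<n} (\<lambda>_. laplace b)). \<forall>v\<in>{0..<n}. (v \<in> A \<longleftrightarrow> 10000 / eps\<^sup>2 < real (deg E v) + x v)}"
      by (rule set_eqI) (simp only: vimage_eq Int_iff mem_Collect_eq singleton_iff eqv conj_commute)
    also have "\<dots> \<in> sets (PiM {0..<n} (\<lambda>_. laplace b))"
      by measurable
    finally show "Cf eps n E -` {A} \<inter> space (PiM {0..<n} (\<lambda>_. laplace b)) \<in> sets (PiM {0..<n} (\<lambda>_. laplace b))" .
  qed
qed

lemma comp_Cf_meas:
  "(\<lambda>x. g (Cf eps n E x)) \<in> borel_measurable (PiM {0..<n} (\<lambda>_. laplace b))"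
proof -
  have "(\<lambda>A. g A) \<in> measurable (count_space (Pow {0..<n})) borel" by simp
  from measurable_comp[OF Cf_meas this] show ?thesis by (simp add: comp_def)
qed

lemma mech_emeasure:
  "emeasure (mech eps n E) T = (\<integral>\<^sup>+x. emeasure (measure_pmf (Qd eps n E (Cf eps n E x))) T \<partial>PiM {0..<n} (\<lambda>_. laplace (3 / eps)))"
proof -
  have m: "mech eps n E = bind (PiM {0..<n} (\<lambda>_. laplace (3 / eps))) (\<lambda>x. measure_pmf (Qd eps n E (Cf eps n E x)))"
    by (simp add: mech_def Qd_def Cf_def Let_def)
  have f: "(\<lambda>x. measure_pmf (Qd eps n E (Cf eps n E x))) \<in> measurable (PiM {0..<n} (\<lambda>_. laplace (3 / eps))) (subprob_algebra (count_space UNIV))"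
  proof -
    have "(\<lambda>A. measure_pmf (Qd eps n E A)) \<in> measurable (count_space (Pow {0..<n})) (subprob_algebra (count_space UNIV))"
      by (simp add: space_subprob_algebra subprob_space_measure_pmf)
    from measurable_comp[OF Cf_meas this] show ?thesis by (simp add: comp_def)
  qed
  have s: "space (PiM {0..<n} (\<lambda>_. laplace (3 / eps))) \<noteq> {}"
    by (simp add: space_PiM PiE_eq_empty_iff)
  show ?thesis unfolding m by (rule emeasure_bind[OF s f]) simp
qed



theorem theorem5p6:
  fixes eps :: real
  assumes "eps > 0"
  shows "\<forall>n E E' T. graph_on n E \<longrightarrow> graph_on n E' \<longrightarrow> neighbor_graphs E E' \<longrightarrow>
           emeasure (mech eps n E) T \<le> ennreal (exp eps) * emeasure (mech eps n E') T"
proof (intro allI impI)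
  fix n E E' T
  assume G: "graph_on n E" "graph_on n E'" and N: "neighbor_graphs E E'"
  obtain u w where adj: "adj1 E E' u w \<or> adj1 E' E u w" and uw: "u < n" "w < n"
    using nb_decomp[OF G N] by blast
  have uw_ne: "u \<noteq> w" using adj unfolding adj1_def by auto
  define b where "b = 3 / eps"
  have b0: "b > 0" using assms by (simp add: b_def)
  define G' where "G' A = emeasure (measure_pmf (Qd eps n E' A)) T" for A
  define cu where "cu = real (deg E u) - real (deg E' u)"
  define cw where "cw = real (deg E w) - real (deg E' w)"
  define I' where "I' = (\<integral>\<^sup>+x. G' (Cf eps n E' x) \<partial>PiM {0..<n} (\<lambda>_. laplace b))"
  have finC: "finite (Cf eps n E x)" for x
    by (rule finite_subset[of _ "{0..<n}"]) (auto simp: Cf_def)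
  have "emeasure (mech eps n E) T
      = (\<integral>\<^sup>+x. emeasure (measure_pmf (Qd eps n E (Cf eps n E x))) T \<partial>PiM {0..<n} (\<lambda>_. laplace b))"
    unfolding b_def by (rule mech_emeasure)
  also have "\<dots> \<le> (\<integral>\<^sup>+x. ennreal (exp (eps / 3)) * G' (Cf eps n E x) \<partial>PiM {0..<n} (\<lambda>_. laplace b))"
    unfolding G'_def by (intro nn_integral_mono Qd_dp[OF adj uw finC assms])
  also have "\<dots> = ennreal (exp (eps / 3)) * (\<integral>\<^sup>+x. G' (Cf eps n E x) \<partial>PiM {0..<n} (\<lambda>_. laplace b))"
    by (rule nn_integral_cmult[OF comp_Cf_meas])
  also have "(\<integral>\<^sup>+x. G' (Cf eps n E x) \<partial>PiM {0..<n} (\<lambda>_. laplace b))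
      = (\<integral>\<^sup>+x. G' (Cf eps n E' ((x(u := x u + cu))(w := x w + cw))) \<partial>PiM {0..<n} (\<lambda>_. laplace b))"
  proof -
    have "real (deg E' v) + ((x(u := x u + cu))(w := x w + cw)) v = real (deg E v) + x v" for x v
    proof (cases "v = w")
      case True then show ?thesis by (simp add: cw_def)
    next
      case False
      show ?thesis
      proof (cases "v = u")
        case True with False show ?thesis by (simp add: cu_def)
      next
        case False2: False
        with False deg_adj(2)[OF adj, of v] show ?thesis by simp
      qed
    qed
    then have "Cf eps n E x = Cf eps n E' ((x(u := x u + cu))(w := x w + cw))" for x
      unfolding Cf_def by presburger
    then show ?thesis by simp
  qed
  also have "\<dots> \<le> ennreal (exp (\<bar>cu\<bar>/b)) * (ennreal (exp (\<bar>cw\<bar>/b)) * I')"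
    unfolding I'_def by (rule pim_shift2[OF b0 _ _ _ uw_ne comp_Cf_meas]) (use uw in auto)
  also have "\<dots> \<le> ennreal (exp (eps / 3)) * (ennreal (exp (eps / 3)) * I')"
  proof -
    have le: "exp (\<bar>c\<bar>/b) \<le> exp (eps / 3)" if "\<bar>c\<bar> \<le> 1" for c
    proof -
      have "\<bar>c\<bar> / b = \<bar>c\<bar> * (eps / 3)" by (simp add: b_def)
      also have "\<dots> \<le> 1 * (eps / 3)" using that assms by (intro mult_right_mono) auto
      finally show ?thesis by simp
    qed
    have "ennreal (exp (\<bar>cu\<bar>/b)) \<le> ennreal (exp (eps / 3))" "ennreal (exp (\<bar>cw\<bar>/b)) \<le> ennreal (exp (eps / 3))"
      using le[of cu] le[of cw] deg_adj(1)[OF adj, of u] deg_adj(1)[OF adj, of w]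
      by (auto simp: cu_def cw_def intro!: ennreal_leI)
    then show ?thesis by (intro mult_mono) auto
  qed
  finally have "emeasure (mech eps n E) T \<le> ennreal (exp (eps / 3)) * (ennreal (exp (eps / 3)) * (ennreal (exp (eps / 3)) * I'))"
    by (simp add: mult_left_mono)
  also have "\<dots> = ennreal (exp eps) * I'"
  proof -
    have eq: "exp (eps / 3) * (exp (eps / 3) * exp (eps / 3)) = exp eps"
      by (simp flip: exp_add)
    have h: "ennreal (exp eps) = ennreal (exp (eps/3)) * (ennreal (exp (eps/3)) * ennreal (exp (eps/3)))"
      unfolding eq[symmetric] by (simp add: ennreal_mult)
    show ?thesis unfolding h by (simp add: mult.assoc)
  qed
  also have "I' = emeasure (mech eps n E') T"
    unfolding I'_def G'_def b_def by (rule mech_emeasure[symmetric])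
  finally show "emeasure (mech eps n E) T \<le> ennreal (exp eps) * emeasure (mech eps n E') T" .
qed

end
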